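(* Let $p$ be an odd prime and let $\alpha\ge 1$, $\beta\ge 2$ be integers. Then the dihedral group $D_{2p^{\alpha}}\cong ZM(p^{\alpha},2,p^{\alpha}-1)$ of order $2p^\alpha$ and the dicyclic group $Dic_{4p^{\beta}}\cong ZM(p^{\beta},4,p^{\beta}-1)$ of order $4p^\beta$ are not $\psi$-divisible.
   Context: For a finite group $G$, $\psi(G)=\sum_{x\in G} o(x)$ denotes the sum of the orders of all elements of $G$. A finite group $G$ is called $\psi$-divisible if $\psi(H)$ divides $\psi(G)$ for every subgroup $H$ of $G$. For positive integers $m,n,r$ with $\gcd(m,n)=\gcd(m,r-1)=1$ and $r^n\equiv 1\pmod m$, $ZM(m,n,r)=\langle a,b \mid a^m=b^n=1,\ b^{-1}ab=a^r\rangle$. *)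

theory Defs
  imports "HOL-Algebra.Multiplicative_Group" "HOL-Computational_Algebra.Primes"
begin

definition psi :: "('a, 'b) monoid_scheme \<Rightarrow> nat" where
  "psi G = (\<Sum>x\<in>carrier G. group.ord G x)"

definition psi_divisible :: "('a, 'b) monoid_scheme \<Rightarrow> bool" where
  "psi_divisible G \<longleftrightarrow>
     (\<forall>H. subgroup H G \<longrightarrow> psi (G\<lparr>carrier := H\<rparr>) dvd psi G)"

text \<open>The metacyclic group ZM(m,n,r) = <a,b | a^m = b^n = 1, b^-1 a b = a^r>,
  realised concretely on normal forms b^j a^i (0 \<le> j < n, 0 \<le> i < m),
  encoded as the pair (j, i).  Since b^-l a^i b^l = a^(i r^l), we have
  (b^j a^i)(b^l a^k) = b^(j+l) a^(i r^l + k).\<close>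
definition ZM :: "nat \<Rightarrow> nat \<Rightarrow> nat \<Rightarrow> (nat \<times> nat) monoid" where
  "ZM m n r = \<lparr> carrier = {0..<n} \<times> {0..<m},
               monoid.mult = (\<lambda>(j, i) (l, k). ((j + l) mod n, (i * r ^ l + k) mod m)),
               monoid.one = (0, 0) \<rparr>"

end

theory Submission imports Defs begin

lemma pow_m1_mod:
  fixes m :: nat assumes "m \<ge> 2"
  shows "(m - 1) ^ l mod m = (if even l then 1 else m - 1)"
proof (induction l)
  case 0 then show ?case using assms by simp
next
  case (Suc l)
  have "(m - 1) ^ Suc l mod m = ((m - 1) ^ l mod m * (m - 1)) mod m"
    by (metis mod_mult_left_eq mult.commute power_Suc)
  also have "\<dots> = (if even (Suc l) then 1 else m - 1)"
  proof (cases "even l")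
    case True then show ?thesis using Suc assms by simp
  next
    case False
    have "(m-1)*(m-1) = m*(m-2) + 1" using assms
      by (cases m; cases "m - 1"; auto simp: algebra_simps)
    moreover have "(1 + m*(m-2)) mod m = 1" using assms by (simp only: mod_mult_self2) simp
    ultimately have "((m-1)*(m-1)) mod m = 1" by (simp add: add.commute)
    then show ?thesis using Suc False by simp
  qed
  finally show ?case .
qed

lemma pow_m1_mod_n:
  fixes m n :: nat assumes "m \<ge> 2" "even n"
  shows "(m - 1) ^ (x mod n) mod m = (m - 1) ^ x mod m"
  proof -
  have "even (x mod n) = even x" using assms
    by (metis dvd_mod_iff even_mod_2_iff mod_mod_cancel)
  then show ?thesis using pow_m1_mod[OF assms(1), of x] pow_m1_mod[OF assms(1), of "x mod n"] by simp
qed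

lemma modmul_aux: "((a mod m) * b + t) mod m = (a * b + t) mod (m::nat)"
  by (metis mod_add_left_eq mod_mult_left_eq)

lemma ZM_assoc2:
  fixes m n :: nat assumes "m \<ge> 2" "even n"
  shows "((i * (m-1)^l + k) mod m * (m-1)^s + t) mod m
       = (i * (m-1)^((l+s) mod n) + (k * (m-1)^s + t) mod m) mod m"
proof -
  have "((i * (m-1)^l + k) mod m * (m-1)^s + t) mod m = ((i * (m-1)^l + k) * (m-1)^s + t) mod m"
    by (rule modmul_aux)
  also have "\<dots> = (i * (m-1)^(l+s) + k*(m-1)^s + t) mod m"
    by (simp add: power_add algebra_simps)
  also have "\<dots> = (i * ((m-1)^(l+s) mod m) + (k*(m-1)^s + t)) mod m"
    by (metis add.assoc mod_add_left_eq mod_mult_right_eq)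
  also have "\<dots> = (i * ((m-1)^((l+s) mod n) mod m) + (k*(m-1)^s + t)) mod m"
    using pow_m1_mod_n[OF assms] by simp
  also have "\<dots> = (i * (m-1)^((l+s) mod n) + (k * (m-1)^s + t) mod m) mod m"
    by (metis mod_add_eq mod_add_left_eq mod_mult_right_eq)
  finally show ?thesis .
qed

lemma ZM_group:
  fixes m n :: nat assumes m: "m \<ge> 2" and n: "even n" "n > 0"
  shows "group (ZM m n (m-1))"
proof (rule groupI)
  let ?G = "ZM m n (m-1)"
  show "x \<otimes>\<^bsub>?G\<^esub> y \<in> carrier ?G" if "x \<in> carrier ?G" "y \<in> carrier ?G" for x y
    using that m n by (auto simp: ZM_def split: prod.splits)
  show "\<one>\<^bsub>?G\<^esub> \<in> carrier ?G" using m n by (simp add: ZM_def)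
  show "(x \<otimes>\<^bsub>?G\<^esub> y) \<otimes>\<^bsub>?G\<^esub> z = x \<otimes>\<^bsub>?G\<^esub> (y \<otimes>\<^bsub>?G\<^esub> z)"
    if "x \<in> carrier ?G" "y \<in> carrier ?G" "z \<in> carrier ?G" for x y z
  proof -
    obtain j i l k s t where xyz: "x = (j,i)" "y = (l,k)" "z = (s,t)" by (metis prod.exhaust)
    show ?thesis using ZM_assoc2[OF m n(1), of i l k s t] unfolding xyz
      by (simp add: ZM_def mod_add_left_eq mod_add_right_eq add.assoc)
  qed
  show "\<one>\<^bsub>?G\<^esub> \<otimes>\<^bsub>?G\<^esub> x = x" if "x \<in> carrier ?G" for x
    using that by (auto simp: ZM_def)
  show "\<exists>y\<in>carrier ?G. y \<otimes>\<^bsub>?G\<^esub> x = \<one>\<^bsub>?G\<^esub>" if "x \<in> carrier ?G" for x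
  proof -
    obtain j i where x: "x = (j,i)" by (metis prod.exhaust)
    have ji: "j < n" "i < m" using that x by (auto simp: ZM_def)
    define R where "R = (m-1)^j"
    have RR: "(R * R) mod m = 1" unfolding R_def
      using pow_m1_mod[OF m, of "j+j"] by (simp add: power_add)
    define a where "a = (i * R) mod m"
    have a: "a \<le> m" unfolding a_def using m by simp
    have "i mod m = (a * R) mod m" unfolding a_def
      by (metis RR mod_mult_left_eq mod_mult_right_eq mult.assoc mult.right_neutral)
    then have "((m - a) * R + i) mod m = ((m - a) * R + a * R) mod m"
      by (metis mod_add_right_eq)
    also have "\<dots> = (m * R) mod m" using a by (simp add: add_mult_distrib[symmetric])
    finally have e: "((m - a) * R + i) mod m = 0" by simp
    have "((m - a) mod m * R + i) mod m = 0"
      using e by (metis mod_add_left_eq mod_mult_left_eq)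
    moreover have "((n - j) mod n + j) mod n = 0" using ji
      by (metis add_diff_inverse_nat mod_add_left_eq mod_self nat_less_le not_less_iff_gr_or_eq add.commute)
    ultimately show ?thesis using m n unfolding x
      by (intro bexI[of _ "((n - j) mod n, (m - a) mod m)"]) (auto simp: ZM_def R_def)
  qed
qed


lemma ZM_mult: "(j,i) \<otimes>\<^bsub>ZM m n r\<^esub> (l,k) = ((j+l) mod n, (i*r^l+k) mod m)"
  by (simp add: ZM_def)
lemma ZM_one: "\<one>\<^bsub>ZM m n r\<^esub> = (0,0)"
  by (simp add: ZM_def)
lemma ZM_carrier: "carrier (ZM m n r) = {0..<n} \<times> {0..<m}"
  by (simp add: ZM_def)

lemma odd_sum_odd: "(\<And>i. i < (m::nat) \<Longrightarrow> odd (f i :: nat)) \<Longrightarrow> even (\<Sum>i<m. f i) \<longleftrightarrow> even m"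
  by (induction m) auto

lemma sub_ord:
  assumes G: "group G" and H: "subgroup H G" and x: "x \<in> H"
  shows "group.ord (G\<lparr>carrier := H\<rparr>) x = group.ord G x"
proof -
  have gH: "group (G\<lparr>carrier := H\<rparr>)" using subgroup.subgroup_is_group[OF H G] .
  have xG: "x \<in> carrier G" using subgroup.subset[OF H] x by blast
  show ?thesis
    unfolding group.ord_unique[OF gH, of x, simplified, OF x]
    using group.pow_eq_id[OF G xG] monoid.nat_pow_consistent[OF group.is_monoid[OF G], of x _ H]
    by simp
qed

locale zmc =
  fixes p e n :: nat
  assumes p: "prime p" and podd: "odd p" and e: "e \<ge> 1" and n: "even n" "n > 0"
begin

abbreviation "m \<equiv> p ^ e"
abbreviation "G \<equiv> ZM m n (m - 1)"

lemma m2: "m \<ge> 2"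
proof -
  have "p \<ge> 2" using p prime_ge_2_nat by blast
  moreover have "p \<le> p ^ e" using e p prime_gt_0_nat[OF p] by (simp add: dvd_imp_le dvd_power)
  ultimately show ?thesis by linarith
qed

lemma modd: "odd m" using podd by simp

lemma grp: "group G" using ZM_group[OF m2 n] .

lemma pow0: "(0,i) [^]\<^bsub>G\<^esub> (k::nat) = (0, (i*k) mod m)"
proof (induction k)
  case 0 then show ?case by (simp add: ZM_one)
next
  case (Suc k)
  then show ?case using n
    by (simp add: ZM_mult mod_add_left_eq mod_add_right_eq algebra_simps)
qed

lemma ord0_pow: "i < m \<Longrightarrow> (0,i) [^]\<^bsub>G\<^esub> (d::nat) = \<one>\<^bsub>G\<^esub> \<longleftrightarrow> group.ord G (0,i) dvd d"
  using group.pow_eq_id[OF grp, of "(0,i)" d] n by (simp add: ZM_carrier)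

lemma ord0_dvd: "i < m \<Longrightarrow> group.ord G (0,i) dvd m"
  using ord0_pow[of i m] pow0[of i m] by (simp add: ZM_one)

lemma ord0_1: "i < m \<Longrightarrow> group.ord G (0,i) = 1 \<longleftrightarrow> i = 0"
  using group.ord_eq_1[OF grp, of "(0,i)"] n by (simp add: ZM_carrier ZM_one)

lemma ord0_odd: "i < m \<Longrightarrow> odd (group.ord G (0,i))"
  using ord0_dvd modd dvd_trans by blast

lemma ord0_pos: "i < m \<Longrightarrow> group.ord G (0,i) \<ge> 1"
  using ord0_dvd[of i] m2 by (metis dvd_0_left_iff less_one not_le not_numeral_le_zero)

lemma ord0_p: "i < m \<Longrightarrow> i \<noteq> 0 \<Longrightarrow> p dvd group.ord G (0,i)"
proof -
  assume i: "i < m" "i \<noteq> 0"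
  obtain k where k: "k \<le> e" "group.ord G (0,i) = p ^ k"
    using ord0_dvd[OF i(1)] divides_primepow_nat[OF p] by blast
  have "k \<noteq> 0" using k ord0_1[OF i(1)] i by auto
  then show ?thesis using k by simp
qed

definition "S = (\<Sum>i<m. group.ord G (0,i))"

lemma S_odd: "odd S"
  unfolding S_def using odd_sum_odd[of m "\<lambda>i. group.ord G (0,i)"] ord0_odd modd by blast

lemma S_ge: "S \<ge> m"
proof -
  have "(\<Sum>i<m. (1::nat)) \<le> S" unfolding S_def by (rule sum_mono) (use ord0_pos in auto)
  then show ?thesis by simp
qed

lemma S_modp: "S mod p = 1"
proof -
  have "S = group.ord G (0,0) + (\<Sum>i\<in>{1..<m}. group.ord G (0,i))"
  proof -
    have "{..<m} = insert 0 {1..<m}" using m2 prime_gt_0_nat[OF p] by (simp only: lessThan_atLeast0) auto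
    then show ?thesis unfolding S_def by simp
  qed
  moreover have "group.ord G (0,0) = 1" using ord0_1[of 0] m2 prime_gt_0_nat[OF p] by simp
  moreover have "p dvd (\<Sum>i\<in>{1..<m}. group.ord G (0,i))"
    by (rule dvd_sum) (use ord0_p in auto)
  ultimately obtain q where "S = 1 + p * q" by (auto elim!: dvdE)
  then show ?thesis using prime_gt_1_nat[OF p] mod_mult_self2[of 1 p q] by simp
qed

lemma S_not_dvd: "\<not> S dvd 2 ^ a * m"
proof
  assume d: "S dvd 2 ^ a * m"
  have "\<not> p dvd S" using S_modp p by (metis dvd_imp_mod_0 zero_neq_one)
  then have c1: "coprime S p" using p by (simp add: prime_imp_coprime coprime_commute)
  have c2: "coprime S 2" using S_odd by (simp add: coprime_commute)
  have "coprime S (2 ^ a * m)" using c1 c2 by (simp add: coprime_mult_right_iff coprime_power_right_iff)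
  then have "S = 1" using d coprime_common_divisor_nat[of S "2 ^ a * m" S] by simp
  then show False using S_ge m2 by simp
qed


lemma sq_odd: "odd j \<Longrightarrow> (j,i) \<otimes>\<^bsub>G\<^esub> (j,i) = ((j+j) mod n, 0)"
proof -
  assume j: "odd j"
  have "(i * (m-1)^j + i) mod m = (i * ((m-1)^j mod m) + i) mod m"
    by (metis mod_add_left_eq mod_mult_right_eq)
  also have "\<dots> = (i * (m-1) + i) mod m" using pow_m1_mod[OF m2, of j] j by simp
  also have "\<dots> = (i * m) mod m"
  proof -
    have "i * (m-1) + i = i * m" using m2 by (cases m) (auto simp: algebra_simps)
    then show ?thesis by simp
  qed
  finally show ?thesis by (simp add: ZM_mult)
qed

lemma pow2x: "x \<in> carrier G \<Longrightarrow> x [^]\<^bsub>G\<^esub> (2::nat) = x \<otimes>\<^bsub>G\<^esub> x"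
  using grp by (simp add: numeral_2_eq_2 monoid.nat_pow_Suc group.is_monoid monoid.nat_pow_0 monoid.l_one)

definition "C = {0::nat} \<times> {0..<m}"

lemma C_sub: "subgroup C G"
proof (rule group.subgroupI[OF grp])
  show "C \<subseteq> carrier G" using n by (auto simp: C_def ZM_carrier)
  show "C \<noteq> {}" using prime_gt_0_nat[OF p] by (auto simp: C_def)
  show "a \<otimes>\<^bsub>G\<^esub> b \<in> C" if "a \<in> C" "b \<in> C" for a b
    using that prime_gt_0_nat[OF p] by (auto simp: C_def ZM_mult)
  show "inv\<^bsub>G\<^esub> a \<in> C" if aC: "a \<in> C" for a
  proof -
    obtain i where a: "a = (0,i)" "i < m" using aC by (auto simp: C_def)
    have "inv\<^bsub>G\<^esub> a = (0, (m - i) mod m)"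
    proof (rule group.inv_equality[OF grp])
      show "(0, (m - i) mod m) \<otimes>\<^bsub>G\<^esub> a = \<one>\<^bsub>G\<^esub>"
        using a by (simp add: ZM_mult ZM_one mod_add_left_eq)
      show "a \<in> carrier G" using a n by (simp add: ZM_carrier)
      show "(0, (m - i) mod m) \<in> carrier G" using a n prime_gt_0_nat[OF p] by (simp add: ZM_carrier)
    qed
    then show ?thesis using prime_gt_0_nat[OF p] by (simp add: C_def)
  qed
qed

lemma psiC: "psi (G\<lparr>carrier := C\<rparr>) = S"
proof -
  have "psi (G\<lparr>carrier := C\<rparr>) = (\<Sum>x\<in>C. group.ord G x)"
    unfolding psi_def using sub_ord[OF grp C_sub] by (simp cong: sum.cong)
  also have "\<dots> = (\<Sum>i<m. group.ord G (0,i))"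
  proof -
    have "C = (Pair 0) ` {..<m}" unfolding C_def by auto
    moreover have "inj_on (Pair (0::nat)) {..<m}" by (auto simp: inj_on_def)
    ultimately show ?thesis by (simp add: sum.reindex)
  qed
  finally show ?thesis by (simp add: S_def)
qed

lemma psiG: "psi G = (\<Sum>j<n. \<Sum>i<m. group.ord G (j,i))"
  unfolding psi_def ZM_carrier lessThan_atLeast0 by (simp add: sum.cartesian_product)

lemma ord_odd2: "n = 2 \<Longrightarrow> i < m \<Longrightarrow> group.ord G (1,i) = 2"
proof -
  assume n2: "n = 2" and i: "i < m"
  have x: "(1,i) \<in> carrier G" using n2 i by (simp add: ZM_carrier)
  have "(1,i) [^]\<^bsub>G\<^esub> (2::nat) = \<one>\<^bsub>G\<^esub>" using pow2x[OF x] sq_odd[of 1 i] n2 by (simp add: ZM_one)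
  then have d: "group.ord G (1,i) dvd 2" using group.pow_eq_id[OF grp x] by simp
  have "group.ord G (1,i) \<noteq> 1" using group.ord_eq_1[OF grp x] by (simp add: ZM_one)
  moreover have "group.ord G (1,i) \<le> 2" using d by (auto intro: dvd_imp_le)
  moreover have "group.ord G (1,i) > 0" using d by (cases "group.ord G (1,i) = 0") auto
  ultimately show ?thesis by linarith
qed

lemma ord_odd4: "n = 4 \<Longrightarrow> odd j \<Longrightarrow> j < 4 \<Longrightarrow> i < m \<Longrightarrow> group.ord G (j,i) = 4"
proof -
  assume n4: "n = 4" and j: "odd j" "j < 4" and i: "i < m"
  have x: "(j,i) \<in> carrier G" using n4 i j by (simp add: ZM_carrier)
  have jj: "(j + j) mod 4 = 2" using j by presburger
  have x2: "(j,i) [^]\<^bsub>G\<^esub> (2::nat) = (2,0)" using pow2x[OF x] sq_odd[OF j(1), of i] n4 jj by simp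
  have "(j,i) [^]\<^bsub>G\<^esub> (4::nat) = (j,i) [^]\<^bsub>G\<^esub> (2::nat) \<otimes>\<^bsub>G\<^esub> (j,i) [^]\<^bsub>G\<^esub> (2::nat)"
    using monoid.nat_pow_mult[OF group.is_monoid[OF grp] x, of 2 2] by simp
  also have "\<dots> = \<one>\<^bsub>G\<^esub>" using x2 n4 by (simp add: ZM_mult ZM_one)
  finally have d: "group.ord G (j,i) dvd 4" using group.pow_eq_id[OF grp x] by simp
  have nd: "\<not> group.ord G (j,i) dvd 2" using group.pow_eq_id[OF grp x, of 2] x2 by (simp add: ZM_one)
  have "group.ord G (j,i) \<le> 4" using d by (auto intro: dvd_imp_le)
  moreover have "group.ord G (j,i) > 0" using d by (cases "group.ord G (j,i) = 0") auto
  ultimately have "group.ord G (j,i) \<in> {1,2,3,4}" by auto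
  then show ?thesis using nd d by auto
qed

lemma pow_2i: "n = 4 \<Longrightarrow> (2,i) [^]\<^bsub>G\<^esub> (k::nat) = ((2*k) mod 4, (i*k) mod m)"
proof (induction k)
  case 0 then show ?case by (simp add: ZM_one)
next
  case (Suc k)
  have r2: "(m-1)^2 mod m = 1" using pow_m1_mod[OF m2, of 2] by simp
  have "((i*k) mod m * (m-1)^2 + i) mod m = ((i*k) * ((m-1)^2 mod m) + i) mod m"
    by (metis mod_add_left_eq mod_mult_left_eq mod_mult_right_eq)
  also have "\<dots> = (i * Suc k) mod m" using r2 by (simp add: algebra_simps)
  finally have e2: "((i*k) mod m * (m-1)^2 + i) mod m = (i * Suc k) mod m" .
  have e1: "((2*k) mod 4 + 2) mod 4 = (2 * Suc k) mod 4" by presburger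
  have "(2,i) [^]\<^bsub>G\<^esub> Suc k = (2,i) [^]\<^bsub>G\<^esub> k \<otimes>\<^bsub>G\<^esub> (2,i)" by simp
  also have "\<dots> = ((2*k) mod 4, (i*k) mod m) \<otimes>\<^bsub>G\<^esub> (2,i)" using Suc by simp
  also have "\<dots> = (((2*k) mod 4 + 2) mod 4, ((i*k) mod m * (m-1)^2 + i) mod m)"
    using Suc.prems by (simp only: ZM_mult)
  finally show ?case using e1 e2 by simp
qed

lemma ord_2i: "n = 4 \<Longrightarrow> i < m \<Longrightarrow> group.ord G (2,i) = 2 * group.ord G (0,i)"
proof -
  assume n4: "n = 4" and i: "i < m"
  have x: "(2,i) \<in> carrier G" using n4 i by (simp add: ZM_carrier)
  let ?o = "group.ord G (0,i)"
  have co: "coprime 2 ?o" using ord0_odd[OF i] by simp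
  have "(2,i) [^]\<^bsub>G\<^esub> d = \<one>\<^bsub>G\<^esub> \<longleftrightarrow> 2 * ?o dvd d" for d :: nat
  proof -
    have "(2,i) [^]\<^bsub>G\<^esub> d = \<one>\<^bsub>G\<^esub> \<longleftrightarrow> (2*d) mod 4 = 0 \<and> (i*d) mod m = 0"
      using pow_2i[OF n4] by (simp add: ZM_one)
    also have "\<dots> \<longleftrightarrow> 2 dvd d \<and> ?o dvd d"
      using ord0_pow[OF i, of d] pow0[of i d] by (auto simp: ZM_one)
    also have "\<dots> \<longleftrightarrow> 2 * ?o dvd d"
    proof
      assume "2 dvd d \<and> ?o dvd d" then show "2 * ?o dvd d" using divides_mult co by blast
    next
      assume "2 * ?o dvd d" then show "2 dvd d \<and> ?o dvd d" using dvd_mult_left dvd_mult_right by blast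
    qed
    finally show ?thesis .
  qed
  then show ?thesis using group.ord_unique[OF grp x] by blast
qed

lemma sum01: "(\<Sum>j\<in>{0,1::nat}. f j) = f 0 + (f 1 :: nat)" by simp
lemma sum0123: "(\<Sum>j\<in>{0,1,2,3::nat}. f j) = f 0 + f 1 + f 2 + (f 3 :: nat)" by simp

lemma S_dvd: "psi_divisible G \<Longrightarrow> S dvd psi G"
  using C_sub psiC unfolding psi_divisible_def by metis

lemma not_div2: "n = 2 \<Longrightarrow> \<not> psi_divisible G"
proof
  assume n2: "n = 2" and d: "psi_divisible G"
  have s1: "(\<Sum>i<m. group.ord G (1,i)) = (\<Sum>i<m. 2)"
    using ord_odd2[OF n2] by (intro sum.cong) auto
  have nn: "{..<n} = {0,1}" using n2 by auto
  have "psi G = S + 2 * m"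
    unfolding psiG nn sum01 s1 S_def by simp
  then have "S dvd S + 2 * m" using S_dvd[OF d] by simp
  then have "S dvd 2 ^ 1 * m" using dvd_add_right_iff[of S S "2*m"] by simp
  then show False using S_not_dvd by blast
qed

lemma not_div4: "n = 4 \<Longrightarrow> \<not> psi_divisible G"
proof
  assume n4: "n = 4" and d: "psi_divisible G"
  have s1: "(\<Sum>i<m. group.ord G (1,i)) = (\<Sum>i<m. 4)"
    using ord_odd4[OF n4] by (intro sum.cong) auto
  have s3: "(\<Sum>i<m. group.ord G (3,i)) = (\<Sum>i<m. 4)"
    using ord_odd4[OF n4] by (intro sum.cong) auto
  have s2: "(\<Sum>i<m. group.ord G (2,i)) = (\<Sum>i<m. 2 * group.ord G (0,i))"
    using ord_2i[OF n4] by (intro sum.cong) auto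
  have nn: "{..<n} = {0,1,2,3}" using n4 by auto
  have "psi G = S + 4 * m + 2 * S + 4 * m"
    unfolding psiG nn sum0123 s1 s2 s3 S_def by (simp add: sum_distrib_left)
  then have "S dvd S * 3 + 2 ^ 3 * m" using S_dvd[OF d] by simp
  then have "S dvd 2 ^ 3 * m" using dvd_add_right_iff[of S "S * 3" "2^3*m"] by simp
  then show False using S_not_dvd by blast
qed

end

theorem corollary2p5:
  fixes p \<alpha> \<beta> :: nat
  assumes "prime p" and "odd p" and "\<alpha> \<ge> 1" and "\<beta> \<ge> 2"
  shows "\<not> psi_divisible (ZM (p ^ \<alpha>) 2 (p ^ \<alpha> - 1))
         \<and> \<not> psi_divisible (ZM (p ^ \<beta>) 4 (p ^ \<beta> - 1))"
proof
  interpret a: zmc p \<alpha> 2 using assms by unfold_locales auto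
  show "\<not> psi_divisible (ZM (p ^ \<alpha>) 2 (p ^ \<alpha> - 1))" using a.not_div2 by simp
next
  interpret b: zmc p \<beta> 4 using assms by unfold_locales auto
  show "\<not> psi_divisible (ZM (p ^ \<beta>) 4 (p ^ \<beta> - 1))" using b.not_div4 by simp
qed

end
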